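(* If there exists an $h\times h$ real Hadamard matrix with $h\equiv 1$ or $2\pmod 3$, then there exists an equiangular tight frame of $N$ vectors in $\mathbb{R}^M$ with \[ M=\tfrac{1}{3}(h+1)(2h+1),\qquad N=h(2h+1). \]
   Context: A real Hadamard matrix of size $h$ is an $h\times h$ matrix $\mathbf{H}$ with entries in $\{\pm1\}$ such that $\mathbf{H}\mathbf{H}^{T}=h\mathbf{I}$. An equiangular tight frame (ETF) of $N$ vectors in $\mathbb{R}^M$ is a sequence $\{\phi_i\}_{i=1}^N$ of nonzero vectors of equal norm such that $|\langle\phi_i,\phi_j\rangle|$ is the same for all $i\neq j$ and $\sum_i\phi_i\phi_i^{T}$ is a scalar multiple of the identity on $\mathbb{R}^M$. *)

theory Defs
  imports Main "HOL-Analysis.Analysis"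
begin

definition is_hadamard :: "nat \<Rightarrow> (nat \<Rightarrow> nat \<Rightarrow> real) \<Rightarrow> bool" where
  "is_hadamard h H \<longleftrightarrow>
     (\<forall>i<h. \<forall>j<h. H i j = 1 \<or> H i j = -1) \<and>
     (\<forall>i<h. \<forall>j<h. (\<Sum>k<h. H i k * H j k) = (if i = j then real h else 0))"

definition inner_M :: "nat \<Rightarrow> (nat \<Rightarrow> real) \<Rightarrow> (nat \<Rightarrow> real) \<Rightarrow> real" where
  "inner_M M x y = (\<Sum>a<M. x a * y a)"

definition is_ETF :: "nat \<Rightarrow> nat \<Rightarrow> (nat \<Rightarrow> nat \<Rightarrow> real) \<Rightarrow> bool" where
  "is_ETF M N phi \<longleftrightarrow>
     (\<forall>i<N. \<exists>a<M. phi i a \<noteq> 0) \<and>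
     (\<forall>i<N. \<forall>j<N. inner_M M (phi i) (phi i) = inner_M M (phi j) (phi j)) \<and>
     (\<forall>i<N. \<forall>j<N. \<forall>k<N. \<forall>l<N. i \<noteq> j \<longrightarrow> k \<noteq> l \<longrightarrow>
        \<bar>inner_M M (phi i) (phi j)\<bar> = \<bar>inner_M M (phi k) (phi l)\<bar>) \<and>
     (\<exists>c::real. \<forall>a<M. \<forall>b<M. (\<Sum>i<N. phi i a * phi i b) = (if a = b then c else 0))"

end

theory Submission
  imports Defs "Jordan_Normal_Form.Determinant"
begin



lemma hadamard_cols:
  assumes "is_hadamard h H" "i < h" "j < h"
  shows "(\<Sum>k<h. H k i * H k j) = (if i = j then real h else 0)"
proof -
  have hpos: "h > 0" using assms by auto
  define A where "A = mat h h (\<lambda>(i,j). H i j)"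
  define B where "B = mat h h (\<lambda>(i,j). H j i / real h)"
  have A: "A \<in> carrier_mat h h" and B: "B \<in> carrier_mat h h" unfolding A_def B_def by auto
  have "A * B = 1\<^sub>m h"
  proof (rule eq_matI)
    fix i j assume ij: "i < dim_row (1\<^sub>m h)" "j < dim_col (1\<^sub>m h)"
    have "(A * B) $$ (i,j) = (\<Sum>k<h. H i k * (H j k / real h))"
      using ij unfolding A_def B_def
      by (simp add: scalar_prod_def lessThan_atLeast0)
    also have "\<dots> = (\<Sum>k<h. H i k * H j k) / real h"
      by (simp add: sum_divide_distrib)
    also have "\<dots> = 1\<^sub>m h $$ (i,j)" using assms(1) ij hpos unfolding is_hadamard_def by auto
    finally show "(A * B) $$ (i,j) = 1\<^sub>m h $$ (i,j)" .
  qed (auto simp: A_def B_def)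
  hence BA: "B * A = 1\<^sub>m h" using mat_mult_left_right_inverse[OF A B] by blast
  have "(B * A) $$ (i,j) = (\<Sum>k<h. (H k i / real h) * H k j)"
    using assms unfolding A_def B_def
    by (simp add: scalar_prod_def lessThan_atLeast0)
  also have "\<dots> = (\<Sum>k<h. H k i * H k j) / real h"
    by (simp add: sum_divide_distrib)
  finally have "(\<Sum>k<h. H k i * H k j) / real h = (if i = j then 1 else 0)"
    using BA assms by simp
  thus ?thesis using hpos by (auto simp: field_simps split: if_splits)
qed



lemma etf_transfer:
  fixes \<psi> :: "'i \<Rightarrow> 'c \<Rightarrow> real"
  assumes fin: "finite I" "finite C" and cI: "card I = N" and cC: "card C = M"
    and nz: "\<forall>i\<in>I. \<exists>a\<in>C. \<psi> i a \<noteq> 0"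
    and nrm: "\<forall>i\<in>I. (\<Sum>a\<in>C. \<psi> i a * \<psi> i a) = d"
    and ang: "\<forall>i\<in>I. \<forall>j\<in>I. i \<noteq> j \<longrightarrow> \<bar>\<Sum>a\<in>C. \<psi> i a * \<psi> j a\<bar> = \<alpha>"
    and tight: "\<forall>a\<in>C. \<forall>b\<in>C. (\<Sum>i\<in>I. \<psi> i a * \<psi> i b) = (if a = b then c else 0)"
  shows "\<exists>phi. is_ETF M N phi"
proof -
  obtain g where g: "bij_betw g {0..<N} I" using ex_bij_betw_nat_finite[OF fin(1)] cI by blast
  obtain e where e: "bij_betw e {0..<M} C" using ex_bij_betw_nat_finite[OF fin(2)] cC by blast
  define phi where "phi n m = \<psi> (g n) (e m)" for n m
  have gI: "n < N \<Longrightarrow> g n \<in> I" for n using g by (auto simp: bij_betw_def)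
  have eC: "m < M \<Longrightarrow> e m \<in> C" for m using e by (auto simp: bij_betw_def)
  have ginj: "n < N \<Longrightarrow> n' < N \<Longrightarrow> g n = g n' \<Longrightarrow> n = n'" for n n'
    using g by (auto simp: bij_betw_def inj_on_def)
  have einj: "m < M \<Longrightarrow> m' < M \<Longrightarrow> e m = e m' \<Longrightarrow> m = m'" for m m'
    using e by (auto simp: bij_betw_def inj_on_def)
  have ip: "inner_M M (phi n) (phi n') = (\<Sum>a\<in>C. \<psi> (g n) a * \<psi> (g n') a)" for n n'
    unfolding inner_M_def phi_def lessThan_atLeast0
    using sum.reindex_bij_betw[OF e, of "\<lambda>a. \<psi> (g n) a * \<psi> (g n') a"] by simp
  have fr: "(\<Sum>i<N. phi i m * phi i m') = (\<Sum>i\<in>I. \<psi> i (e m) * \<psi> i (e m'))" for m m'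
    unfolding phi_def lessThan_atLeast0
    using sum.reindex_bij_betw[OF g, of "\<lambda>i. \<psi> i (e m) * \<psi> i (e m')"] by simp
  have "is_ETF M N phi"
    unfolding is_ETF_def
  proof (intro conjI allI impI)
    fix i assume i: "i < N"
    then obtain a where a: "a \<in> C" "\<psi> (g i) a \<noteq> 0" using nz gI by blast
    then obtain m where "m < M" "e m = a" using e by (auto simp: bij_betw_def)
    thus "\<exists>a<M. phi i a \<noteq> 0" using a by (auto simp: phi_def)
  next
    fix i j assume "i < N" "j < N"
    thus "inner_M M (phi i) (phi i) = inner_M M (phi j) (phi j)" using ip nrm gI by simp
  next
    fix i j k l assume "i < N" "j < N" "k < N" "l < N" "i \<noteq> j" "k \<noteq> l"
    thus "\<bar>inner_M M (phi i) (phi j)\<bar> = \<bar>inner_M M (phi k) (phi l)\<bar>"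
      using ip ang gI ginj by metis
  next
    show "\<exists>c. \<forall>a<M. \<forall>b<M. (\<Sum>i<N. phi i a * phi i b) = (if a = b then c else 0)"
      by (rule exI[of _ c]) (use fr tight eC einj in auto)
  qed
  thus ?thesis by blast
qed



lemma sum_double_range:
  fixes f :: "nat \<Rightarrow> 'b::comm_monoid_add"
  shows "(\<Sum>c<2*h. f c) = (\<Sum>c<h. f c) + (\<Sum>c<h. f (c+h))"
proof -
  have "(\<Sum>c<2*h. f c) = sum f {0..<h} + sum f {h..<2*h}"
    by (simp add: lessThan_atLeast0 sum.atLeastLessThan_concat)
  also have "sum f {h..<2*h} = sum f {0+h..<h+h}" by (simp add: mult_2)
  also have "\<dots> = (\<Sum>c<h. f (c+h))" unfolding sum.shift_bounds_nat_ivl by (simp add: lessThan_atLeast0)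
  finally show ?thesis by (simp add: lessThan_atLeast0)
qed

lemma hadamard_sq:
  assumes "is_hadamard h H" "i < h" "j < h" shows "H i j * H i j = 1"
proof -
  have "H i j = 1 \<or> H i j = -1" using assms unfolding is_hadamard_def by blast
  thus ?thesis by auto
qed

lemma hadamard_normalize:
  assumes "is_hadamard h H" "c0 < h"
  shows "is_hadamard h (\<lambda>i j. H i j * H i c0)"
proof -
  have sq: "i < h \<Longrightarrow> j < h \<Longrightarrow> H i j * H i j = 1" for i j
    using hadamard_sq[OF assms(1)] by blast
  show ?thesis unfolding is_hadamard_def
  proof (intro conjI allI impI)
    fix i j assume "i < h" "j < h"
    hence "H i j = 1 \<or> H i j = -1" "H i c0 = 1 \<or> H i c0 = -1" using assms unfolding is_hadamard_def by blast+
    thus "H i j * H i c0 = 1 \<or> H i j * H i c0 = - 1" by auto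
  next
    fix i j assume ij: "i < h" "j < h"
    show "(\<Sum>k<h. H i k * H i c0 * (H j k * H j c0)) = (if i = j then real h else 0)"
    proof (cases "i = j")
      case True
      have "(\<Sum>k<h. H i k * H i c0 * (H j k * H j c0)) = (\<Sum>k<h. (H i k * H i k) * (H i c0 * H i c0))"
        using True by (intro sum.cong) (simp_all add: mult_ac)
      also have "\<dots> = (\<Sum>k<h. 1)" using sq ij assms(2) by simp
      finally show ?thesis using True by simp
    next
      case False
      have "(\<Sum>k<h. H i k * H i c0 * (H j k * H j c0)) = (\<Sum>k<h. (H i c0 * H j c0) * (H i k * H j k))"
        by (intro sum.cong) (simp_all add: mult_ac)
      also have "\<dots> = (H i c0 * H j c0) * (\<Sum>k<h. H i k * H j k)"
        by (rule sum_distrib_left[symmetric])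
      also have "\<dots> = 0" using False assms ij unfolding is_hadamard_def by simp
      finally show ?thesis using False by simp
    qed
  qed
qed


definition sylv :: "nat \<Rightarrow> (nat \<Rightarrow> nat \<Rightarrow> real) \<Rightarrow> nat \<Rightarrow> nat \<Rightarrow> real" where
  "sylv h H x c = H (x mod h) (c mod h) * (if h \<le> x \<and> h \<le> c then -1 else 1)"

lemma hadamard_sylv:
  assumes had: "is_hadamard h H"
  shows "is_hadamard (2*h) (sylv h H)"
  unfolding is_hadamard_def
proof (intro conjI allI impI)
  fix i j assume "i < 2*h" "j < 2*h"
  hence a: "i mod h < h" "j mod h < h" by auto
  show "sylv h H i j = 1 \<or> sylv h H i j = -1"
  proof -
    have "H (i mod h) (j mod h) = 1 \<or> H (i mod h) (j mod h) = -1" using had a unfolding is_hadamard_def by blast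
    thus ?thesis unfolding sylv_def by auto
  qed
next
  fix i j assume ij: "i < 2*h" "j < 2*h"
  have hp: "h > 0" using ij by auto
  define s where "s x = (if h \<le> x then -1 else (1::real))" for x
  have lo: "c < h \<Longrightarrow> sylv h H x c = H (x mod h) c" for x c by (simp add: sylv_def)
  have hi: "c < h \<Longrightarrow> sylv h H x (c+h) = H (x mod h) c * s x" for x c by (simp add: sylv_def s_def)
  have "(\<Sum>k<2*h. sylv h H i k * sylv h H j k)
      = (\<Sum>k<h. H (i mod h) k * H (j mod h) k) + (\<Sum>k<h. H (i mod h) k * H (j mod h) k) * (s i * s j)"
  proof -
    have e1: "(\<Sum>k<h. sylv h H i k * sylv h H j k) = (\<Sum>k<h. H (i mod h) k * H (j mod h) k)"
      by (rule sum.cong[OF refl]) (simp add: lo)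
    have "(\<Sum>k<h. sylv h H i (k+h) * sylv h H j (k+h)) = (\<Sum>k<h. (s i * s j) * (H (i mod h) k * H (j mod h) k))"
      by (rule sum.cong[OF refl]) (simp add: hi)
    also have "\<dots> = (s i * s j) * (\<Sum>k<h. H (i mod h) k * H (j mod h) k)"
      by (rule sum_distrib_left[symmetric])
    finally show ?thesis unfolding sum_double_range e1 by (simp add: mult.commute)
  qed
  also have "\<dots> = (if i mod h = j mod h then real h else 0) * (1 + s i * s j)"
    using had hp unfolding is_hadamard_def by (simp add: algebra_simps)
  also have "\<dots> = (if i = j then real (2*h) else 0)"
  proof -
    have m: "x < 2*h \<Longrightarrow> x mod h = (if x < h then x else x - h)" for x
      by (simp add: mod_if)
    show ?thesis
    proof (cases "h \<le> i"; cases "h \<le> j")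
      assume "h \<le> i" "h \<le> j"
      hence "i mod h = i - h" "j mod h = j - h" using m ij by auto
      thus ?thesis using \<open>h \<le> i\<close> \<open>h \<le> j\<close> unfolding s_def by auto
    next
      assume "h \<le> i" "\<not> h \<le> j"
      thus ?thesis unfolding s_def by auto
    next
      assume "\<not> h \<le> i" "h \<le> j"
      thus ?thesis unfolding s_def by auto
    next
      assume "\<not> h \<le> i" "\<not> h \<le> j"
      thus ?thesis unfolding s_def by auto
    qed
  qed
  finally show "(\<Sum>k<2*h. sylv h H i k * sylv h H j k) = (if i = j then real (2*h) else 0)" .
qed

lemma hadamard_4dvd:
  assumes had: "is_hadamard h H" and h3: "h \<ge> 3"
  shows "4 dvd h"
proof -
  have r: "H i k = 1 \<or> H i k = -1" if "i < 3" "k < h" for i k using had that h3 unfolding is_hadamard_def by auto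
  define t where "t k = (H 0 k + H 1 k) * (H 0 k + H 2 k)" for k
  have tv: "k < h \<Longrightarrow> t k = 4 * (if H 1 k = H 0 k \<and> H 2 k = H 0 k then 1 else 0)" for k
    using r[of 0 k] r[of 1 k] r[of 2 k] unfolding t_def by auto
  have "(\<Sum>k<h. t k) = (\<Sum>k<h. H 0 k * H 0 k) + (\<Sum>k<h. H 0 k * H 2 k) + (\<Sum>k<h. H 1 k * H 0 k) + (\<Sum>k<h. H 1 k * H 2 k)"
    unfolding t_def by (simp add: algebra_simps sum.distrib)
  also have "\<dots> = real h" using had h3 unfolding is_hadamard_def by simp
  finally have e1: "(\<Sum>k<h. t k) = real h" .
  define P where "P k = (H 1 k = H 0 k \<and> H 2 k = H 0 k)" for k
  have "(\<Sum>k<h. t k) = (\<Sum>k<h. 4 * (if P k then 1 else 0))"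
    by (rule sum.cong[OF refl]) (simp add: tv P_def)
  also have "\<dots> = 4 * (\<Sum>k<h. (if P k then 1 else 0))" by (simp add: sum_distrib_left)
  also have "(\<Sum>k<h. (if P k then 1 else 0)) = real (card ({..<h} \<inter> {k. P k}))"
    by (simp add: sum.If_cases)
  finally have "real h = 4 * real (card ({..<h} \<inter> {k. P k}))" using e1 by simp
  hence "h = 4 * card ({..<h} \<inter> {k. P k})" by linarith
  thus ?thesis by (metis dvd_triv_left)
qed



definition sts :: "'a set \<Rightarrow> 'a set set \<Rightarrow> bool" where
  "sts V Bl \<longleftrightarrow> finite V \<and> (\<forall>\<beta>\<in>Bl. \<beta> \<subseteq> V \<and> card \<beta> = 3) \<and>
     (\<forall>p\<in>V. \<forall>q\<in>V. p \<noteq> q \<longrightarrow> (\<exists>!\<beta>. \<beta> \<in> Bl \<and> p \<in> \<beta> \<and> q \<in> \<beta>))"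

lemma sts_finite: "sts V Bl \<Longrightarrow> finite Bl"
  unfolding sts_def by (meson Pow_iff finite_Pow_iff finite_subset subsetI)

lemma sts_finite_block: "sts V Bl \<Longrightarrow> \<beta> \<in> Bl \<Longrightarrow> finite \<beta>"
  unfolding sts_def by (meson finite_subset)

lemma sts_uniq:
  assumes "sts V Bl" "p \<in> V" "q \<in> V" "p \<noteq> q" "\<beta> \<in> Bl" "\<beta>' \<in> Bl"
    "p \<in> \<beta>" "q \<in> \<beta>" "p \<in> \<beta>'" "q \<in> \<beta>'"
  shows "\<beta> = \<beta>'"
  using assms unfolding sts_def by blast

lemma sts_rep:
  assumes S: "sts V Bl" and p: "p \<in> V"
  shows "2 * card {\<beta>\<in>Bl. p \<in> \<beta>} = card V - 1"
proof -
  let ?R = "{\<beta>\<in>Bl. p \<in> \<beta>}"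
  let ?S = "Sigma ?R (\<lambda>\<beta>. \<beta> - {p})"
  have fR: "finite ?R" using sts_finite[OF S] by simp
  have c2: "\<beta> \<in> ?R \<Longrightarrow> card (\<beta> - {p}) = 2" for \<beta> using S unfolding sts_def by auto
  have "card ?S = (\<Sum>\<beta>\<in>?R. card (\<beta> - {p}))"
    using fR sts_finite_block[OF S] by (intro card_SigmaI) auto
  also have "\<dots> = 2 * card ?R" using c2 by simp
  finally have e1: "card ?S = 2 * card ?R" .
  have "bij_betw snd ?S (V - {p})"
    unfolding bij_betw_def
  proof
    show "inj_on snd ?S"
    proof (rule inj_onI)
      fix x y assume "x \<in> ?S" "y \<in> ?S" "snd x = snd y"
      moreover obtain b1 q1 where x: "x = (b1, q1)" by force
      moreover obtain b2 q2 where y: "y = (b2, q2)" by force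
      ultimately have "b1 \<in> Bl" "b2 \<in> Bl" "p \<in> b1" "p \<in> b2" "q1 \<in> b1" "q1 \<in> b2" "q1 \<noteq> p" "q1 = q2" by auto
      moreover have "q1 \<in> V" using S \<open>b1 \<in> Bl\<close> \<open>q1 \<in> b1\<close> unfolding sts_def by auto
      ultimately have "b1 = b2" using sts_uniq[OF S p] by metis
      thus "x = y" using x y \<open>q1 = q2\<close> by simp
    qed
  next
    show "snd ` ?S = V - {p}"
    proof
      show "snd ` ?S \<subseteq> V - {p}" using S unfolding sts_def by fastforce
    next
      show "V - {p} \<subseteq> snd ` ?S"
      proof
        fix q assume q: "q \<in> V - {p}"
        then obtain \<beta> where "\<beta> \<in> Bl" "p \<in> \<beta>" "q \<in> \<beta>" using S p unfolding sts_def by blast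
        hence "(\<beta>, q) \<in> ?S" using q by auto
        thus "q \<in> snd ` ?S" by force
      qed
    qed
  qed
  hence "card ?S = card (V - {p})" by (rule bij_betw_same_card)
  also have "\<dots> = card V - 1" using p by simp
  finally show ?thesis using e1 by simp
qed

lemma sts_blocks:
  assumes S: "sts V Bl"
  shows "6 * card Bl = card V * (card V - 1)"
proof -
  have fV: "finite V" using S unfolding sts_def by auto
  have fB: "finite Bl" using sts_finite[OF S] .
  have "3 * card Bl = (\<Sum>\<beta>\<in>Bl. card \<beta>)" using S unfolding sts_def by simp
  also have "\<dots> = (\<Sum>\<beta>\<in>Bl. \<Sum>p\<in>V. if p \<in> \<beta> then 1 else 0)"
  proof (rule sum.cong[OF refl])
    fix \<beta> assume "\<beta> \<in> Bl"
    hence "\<beta> \<subseteq> V" using S unfolding sts_def by auto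
    thus "card \<beta> = (\<Sum>p\<in>V. if p \<in> \<beta> then 1 else 0)"
      using fV by (simp add: sum.If_cases Int_absorb1 Int_commute)
  qed
  also have "\<dots> = (\<Sum>p\<in>V. \<Sum>\<beta>\<in>Bl. if p \<in> \<beta> then 1 else 0)" by (rule sum.swap)
  also have "\<dots> = (\<Sum>p\<in>V. card {\<beta>\<in>Bl. p \<in> \<beta>})"
    using fB by (simp add: sum.If_cases) (metis Collect_conj_eq Collect_mem_eq Int_commute)
  finally have "2 * (3 * card Bl) = (\<Sum>p\<in>V. 2 * card {\<beta>\<in>Bl. p \<in> \<beta>})" by (simp add: sum_distrib_left)
  also have "\<dots> = (\<Sum>p\<in>V. card V - 1)" using sts_rep[OF S] by simp
  finally show ?thesis by simp
qed



lemma sum_C: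
  fixes f :: "'a set + 'a option \<Rightarrow> real"
  assumes "finite V" "finite Bl"
  shows "(\<Sum>a\<in>Inl ` Bl \<union> Inr ` (Some ` V \<union> {None}). f a)
    = (\<Sum>\<beta>\<in>Bl. f (Inl \<beta>)) + (\<Sum>q\<in>V. f (Inr (Some q))) + f (Inr None)"
proof -
  have d1: "Inl ` Bl \<inter> Inr ` (Some ` V \<union> {None}) = {}" by auto
  have "(\<Sum>a\<in>Inl ` Bl \<union> Inr ` (Some ` V \<union> {None}). f a)
     = (\<Sum>a\<in>Inl ` Bl. f a) + (\<Sum>a\<in>Inr ` (Some ` V \<union> {None}). f a)"
    using assms by (intro sum.union_disjoint) auto
  also have "(\<Sum>a\<in>Inl ` Bl. f a) = (\<Sum>\<beta>\<in>Bl. f (Inl \<beta>))" by (simp add: sum.reindex)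
  also have "(\<Sum>a\<in>Inr ` (Some ` V \<union> {None}). f a) = (\<Sum>z\<in>Some ` V \<union> {None}. f (Inr z))"
    by (rule sum.reindex[unfolded comp_def]) auto
  also have "\<dots> = (\<Sum>z\<in>Some ` V. f (Inr z)) + f (Inr None)"
    using assms by (subst sum.union_disjoint) auto
  also have "(\<Sum>z\<in>Some ` V. f (Inr z)) = (\<Sum>q\<in>V. f (Inr (Some q)))" by (simp add: sum.reindex)
  finally show ?thesis by simp
qed

lemma sum_I:
  fixes f :: "('a \<times> nat) + nat \<Rightarrow> real"
  assumes "finite V"
  shows "(\<Sum>i\<in>(V \<times> {..<h}) <+> {..<m}. f i) = (\<Sum>p\<in>V. \<Sum>j<h. f (Inl (p,j))) + (\<Sum>x<m. f (Inr x))"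
  using assms by (simp add: sum.Plus sum.cartesian_product)

lemma card_C:
  fixes V :: "'a set" and Bl :: "'a set set"
  assumes "finite V" "finite Bl"
  shows "card (Inl ` Bl \<union> Inr ` (Some ` V \<union> {None})) = card Bl + card V + 1"
proof -
  have "card (Inl ` Bl \<union> Inr ` (Some ` V \<union> {None})) = card (Inl ` Bl :: ('a set + 'a option) set) + card (Inr ` (Some ` V \<union> {None}) :: ('a set + 'a option) set)"
    using assms by (intro card_Un_disjoint) auto
  also have "\<dots> = card Bl + card (Some ` V \<union> {None})"
    by (simp only: card_image inj_Inl inj_Inr inj_on_subset subset_UNIV)
  also have "card (Some ` V \<union> {None}) = card V + 1" using assms by (simp add: card_image)
  finally show ?thesis by simp
qed




fun psi :: "('a \<Rightarrow> 'a set \<Rightarrow> nat) \<Rightarrow> ('a \<Rightarrow> nat) \<Rightarrow> (nat\<Rightarrow>nat\<Rightarrow>real) \<Rightarrow> (nat\<Rightarrow>nat\<Rightarrow>real)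
   \<Rightarrow> ('a\<times>nat)+nat \<Rightarrow> 'a set + 'a option \<Rightarrow> real" where
  "psi \<sigma> \<tau> A B (Inl (p,j)) (Inl \<beta>) = (if p \<in> \<beta> then sqrt 2 * A j (\<sigma> p \<beta>) else 0)"
| "psi \<sigma> \<tau> A B (Inl (p,j)) (Inr (Some q)) = (if q = p then 2 else 0)"
| "psi \<sigma> \<tau> A B (Inl (p,j)) (Inr None) = 0"
| "psi \<sigma> \<tau> A B (Inr x) (Inl \<beta>) = 0"
| "psi \<sigma> \<tau> A B (Inr x) (Inr (Some q)) = B x (\<tau> q)"
| "psi \<sigma> \<tau> A B (Inr x) (Inr None) = sqrt 3"

lemma sum_ifeq:
  assumes "finite V" "p \<in> V"
  shows "(\<Sum>r\<in>V. (if r = p then c else 0) * f r) = c * (f p::real)"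
proof -
  have "(\<Sum>r\<in>V. (if r = p then c else 0) * f r) = (\<Sum>r\<in>V. if r = p then c * f p else 0)"
    by (rule sum.cong) auto
  thus ?thesis using assms by simp
qed

lemma sq2: "sqrt 2 * a * (sqrt 2 * b) = 2 * (a * (b::real))"
proof -
  have "sqrt 2 * a * (sqrt 2 * b) = (sqrt 2 * sqrt 2) * (a * b)" by (simp only: mult_ac)
  thus ?thesis by simp
qed

lemma tremain:
  fixes V :: "'a set" and Bl :: "'a set set"
  assumes S: "sts V Bl" and cV: "card V = 2*h - 1" and h1: "h \<ge> 1" and had: "is_hadamard h H"
  shows "\<exists>M N phi. 3*M = (h+1)*(2*h+1) \<and> N = h*(2*h+1) \<and> is_ETF M N phi"
proof -
  have fV: "finite V" using S unfolding sts_def by auto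
  have fB: "finite Bl" using sts_finite[OF S] .
  define H0 where "H0 i j = H i j * H i 0" for i j
  have had0: "is_hadamard h H0" unfolding H0_def using hadamard_normalize[OF had] h1 by simp
  have H00: "i < h \<Longrightarrow> H0 i 0 = 1" for i unfolding H0_def using hadamard_sq[OF had] h1 by simp
  have H0sq: "i < h \<Longrightarrow> j < h \<Longrightarrow> H0 i j * H0 i j = 1" for i j using hadamard_sq[OF had0] .
  have H0abs: "i < h \<Longrightarrow> j < h \<Longrightarrow> \<bar>H0 i j\<bar> = 1" for i j using had0 unfolding is_hadamard_def by fastforce
  have H0row: "i < h \<Longrightarrow> j < h \<Longrightarrow> (\<Sum>k<h. H0 i k * H0 j k) = (if i = j then real h else 0)" for i j
    using had0 unfolding is_hadamard_def by blast
  have H0col: "i < h \<Longrightarrow> j < h \<Longrightarrow> (\<Sum>k<h. H0 k i * H0 k j) = (if i = j then real h else 0)" for i j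
    using hadamard_cols[OF had0] by blast
  define W0 where "W0 x c = sylv h H x c * sylv h H x (2*h-1)" for x c
  have hadW: "is_hadamard (2*h) (sylv h H)" using hadamard_sylv[OF had] .
  have hadW0: "is_hadamard (2*h) W0" unfolding W0_def using hadamard_normalize[OF hadW] h1 by simp
  have W0inf: "x < 2*h \<Longrightarrow> W0 x (2*h-1) = 1" for x unfolding W0_def using hadamard_sq[OF hadW] h1 by simp
  have W0sq: "x < 2*h \<Longrightarrow> c < 2*h \<Longrightarrow> W0 x c * W0 x c = 1" for x c using hadamard_sq[OF hadW0] .
  have W0abs: "x < 2*h \<Longrightarrow> c < 2*h \<Longrightarrow> \<bar>W0 x c\<bar> = 1" for x c using hadW0 unfolding is_hadamard_def by fastforce
  have W0row: "x < 2*h \<Longrightarrow> y < 2*h \<Longrightarrow> (\<Sum>k<2*h. W0 x k * W0 y k) = (if x = y then real (2*h) else 0)" for x y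
    using hadW0 unfolding is_hadamard_def by blast
  have W0col: "x < 2*h \<Longrightarrow> y < 2*h \<Longrightarrow> (\<Sum>k<2*h. W0 k x * W0 k y) = (if x = y then real (2*h) else 0)" for x y
    using hadamard_cols[OF hadW0] by blast
  have rep: "p \<in> V \<Longrightarrow> card {\<beta>\<in>Bl. p \<in> \<beta>} = card {1..<h}" for p
    using sts_rep[OF S, of p] cV by simp
  have "\<forall>p\<in>V. \<exists>f. bij_betw f {\<beta>\<in>Bl. p \<in> \<beta>} {1..<h}"
    using rep fB by (auto intro!: finite_same_card_bij)
  then obtain \<sigma> where \<sigma>: "\<And>p. p \<in> V \<Longrightarrow> bij_betw (\<sigma> p) {\<beta>\<in>Bl. p \<in> \<beta>} {1..<h}" by metis
  have \<sigma>rng: "p \<in> V \<Longrightarrow> \<beta> \<in> Bl \<Longrightarrow> p \<in> \<beta> \<Longrightarrow> \<sigma> p \<beta> \<in> {1..<h}" for p \<beta>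
    using \<sigma> unfolding bij_betw_def by blast
  have \<sigma>inj: "p \<in> V \<Longrightarrow> \<beta> \<in> Bl \<Longrightarrow> p \<in> \<beta> \<Longrightarrow> \<gamma> \<in> Bl \<Longrightarrow> p \<in> \<gamma> \<Longrightarrow> \<sigma> p \<beta> = \<sigma> p \<gamma> \<Longrightarrow> \<beta> = \<gamma>" for p \<beta> \<gamma>
    using \<sigma> unfolding bij_betw_def inj_on_def by blast
  obtain \<tau> where \<tau>: "bij_betw \<tau> V {..<2*h-1}"
    using ex_bij_betw_finite_nat[OF fV] cV by (metis lessThan_atLeast0)
  have \<tau>rng: "q \<in> V \<Longrightarrow> \<tau> q < 2*h-1" for q using \<tau> unfolding bij_betw_def by blast
  have \<tau>inj: "q \<in> V \<Longrightarrow> r \<in> V \<Longrightarrow> \<tau> q = \<tau> r \<Longrightarrow> q = r" for q r using \<tau> unfolding bij_betw_def inj_on_def by blast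
  have sum\<tau>: "(\<Sum>q\<in>V. f (\<tau> q)) = (\<Sum>c<2*h-1. f c)" for f :: "nat \<Rightarrow> real"
    using sum.reindex_bij_betw[OF \<tau>] by simp
  have sum2h: "(\<Sum>c<2*h. f c) = (\<Sum>c<2*h-1. f c) + f (2*h-1)" for f :: "nat \<Rightarrow> real"
  proof -
    have "2*h = Suc (2*h-1)" using h1 by simp
    hence "(\<Sum>c<2*h. f c) = (\<Sum>c<Suc (2*h-1). f c)" by metis
    thus ?thesis by simp
  qed
  define I where "I = (V \<times> {..<h}) <+> {..<2*h}"
  define C where "C = (Inl ` Bl \<union> Inr ` (Some ` V \<union> {None}) :: ('a set + 'a option) set)"
  define \<psi> where "\<psi> = psi \<sigma> \<tau> H0 W0"
  have fI: "finite I" unfolding I_def using fV by simp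
  have fC: "finite C" unfolding C_def using fV fB by simp
  have cI: "card I = h*(2*h+1)"
  proof -
    have "card I = card V * h + 2*h" unfolding I_def using fV by (simp add: card_Plus card_cartesian_product)
    moreover obtain k where "h = Suc k" using h1 by (cases h) auto
    ultimately show ?thesis using cV by (simp add: algebra_simps)
  qed
  have cB: "3 * card Bl = (2*h-1)*(h-1)"
  proof -
    obtain k where k: "h = Suc k" using h1 by (cases h) auto
    have "6 * card Bl = (2*k+1)*(2*k)" using sts_blocks[OF S] cV k by simp
    hence "3 * card Bl = (2*k+1)*k" by simp
    thus ?thesis using k by simp
  qed
  have cC: "3 * card C = (h+1)*(2*h+1)"
  proof -
    have "card C = card Bl + 2*h" unfolding C_def using card_C[OF fV fB] cV h1 by simp
    hence "3 * card C = (2*h-1)*(h-1) + 6*h" using cB by simp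
    also have "\<dots> = (h+1)*(2*h+1)"
    proof -
      obtain k where "h = Suc k" using h1 by (cases h) auto
      thus ?thesis by (simp add: algebra_simps)
    qed
    finally show ?thesis .
  qed
  have sum1h: "(\<Sum>c<h. f c) = f 0 + (\<Sum>c\<in>{1..<h}. f c)" for f :: "nat \<Rightarrow> real"
    using h1 by (simp add: lessThan_atLeast0 sum.atLeast_Suc_lessThan)
  define ip where "ip u w = (\<Sum>a\<in>C. \<psi> u a * \<psi> w a)" for u w
  have ipC: "ip u w = (\<Sum>\<beta>\<in>Bl. \<psi> u (Inl \<beta>) * \<psi> w (Inl \<beta>)) + (\<Sum>q\<in>V. \<psi> u (Inr (Some q)) * \<psi> w (Inr (Some q)))
      + \<psi> u (Inr None) * \<psi> w (Inr None)" for u w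
    unfolding ip_def C_def by (rule sum_C[OF fV fB])
  have ipsym: "ip u w = ip w u" for u w unfolding ip_def by (simp add: mult.commute)
  have Kpp: "ip (Inl (p,j)) (Inl (p,k)) = (if j = k then 2*real h + 2 else 2)"
    if p: "p \<in> V" and jk: "j < h" "k < h" for p j k
  proof -
    have "(\<Sum>\<beta>\<in>Bl. \<psi> (Inl (p,j)) (Inl \<beta>) * \<psi> (Inl (p,k)) (Inl \<beta>))
        = (\<Sum>\<beta>\<in>Bl. if p \<in> \<beta> then 2 * (H0 j (\<sigma> p \<beta>) * H0 k (\<sigma> p \<beta>)) else 0)"
      unfolding \<psi>_def by (intro sum.cong) auto
    also have "\<dots> = (\<Sum>\<beta>\<in>{\<beta>\<in>Bl. p \<in> \<beta>}. 2 * (H0 j (\<sigma> p \<beta>) * H0 k (\<sigma> p \<beta>)))"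
      using fB by (simp add: sum.inter_filter)
    also have "\<dots> = (\<Sum>c\<in>{1..<h}. 2 * (H0 j c * H0 k c))"
      using sum.reindex_bij_betw[OF \<sigma>[OF p], of "\<lambda>c. 2 * (H0 j c * H0 k c)"] by simp
    also have "\<dots> = 2 * ((\<Sum>c<h. H0 j c * H0 k c) - H0 j 0 * H0 k 0)"
      by (simp add: sum1h sum_distrib_left)
    also have "\<dots> = (if j = k then 2 * real h - 2 else -2)" using H0row jk H00 by simp
    finally have b: "(\<Sum>\<beta>\<in>Bl. \<psi> (Inl (p,j)) (Inl \<beta>) * \<psi> (Inl (p,k)) (Inl \<beta>)) = (if j = k then 2 * real h - 2 else -2)" .
    have x: "(\<Sum>q\<in>V. \<psi> (Inl (p,j)) (Inr (Some q)) * \<psi> (Inl (p,k)) (Inr (Some q))) = 4"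
      unfolding \<psi>_def using fV p by (simp add: if_distrib cong: if_cong)
    show ?thesis unfolding ipC b x by (simp add: \<psi>_def)
  qed
  have Kpq: "\<bar>ip (Inl (p,j)) (Inl (q,k))\<bar> = 2"
    if pq: "p \<in> V" "q \<in> V" "p \<noteq> q" and jk: "j < h" "k < h" for p q j k
  proof -
    obtain \<beta>0 where b0: "\<beta>0 \<in> Bl" "p \<in> \<beta>0" "q \<in> \<beta>0" using S pq unfolding sts_def by blast
    have set: "{\<beta>\<in>Bl. p \<in> \<beta> \<and> q \<in> \<beta>} = {\<beta>0}" using b0 sts_uniq[OF S pq] by blast
    have "(\<Sum>\<beta>\<in>Bl. \<psi> (Inl (p,j)) (Inl \<beta>) * \<psi> (Inl (q,k)) (Inl \<beta>))
        = (\<Sum>\<beta>\<in>Bl. if p \<in> \<beta> \<and> q \<in> \<beta> then 2 * (H0 j (\<sigma> p \<beta>) * H0 k (\<sigma> q \<beta>)) else 0)"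
      unfolding \<psi>_def by (intro sum.cong) auto
    also have "\<dots> = (\<Sum>\<beta>\<in>{\<beta>\<in>Bl. p \<in> \<beta> \<and> q \<in> \<beta>}. 2 * (H0 j (\<sigma> p \<beta>) * H0 k (\<sigma> q \<beta>)))"
      using fB by (simp add: sum.inter_filter)
    also have "\<dots> = 2 * (H0 j (\<sigma> p \<beta>0) * H0 k (\<sigma> q \<beta>0))" unfolding set by simp
    finally have b: "(\<Sum>\<beta>\<in>Bl. \<psi> (Inl (p,j)) (Inl \<beta>) * \<psi> (Inl (q,k)) (Inl \<beta>)) = 2 * (H0 j (\<sigma> p \<beta>0) * H0 k (\<sigma> q \<beta>0))" .
    have x: "(\<Sum>r\<in>V. \<psi> (Inl (p,j)) (Inr (Some r)) * \<psi> (Inl (q,k)) (Inr (Some r))) = 0"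
      unfolding \<psi>_def using pq by (intro sum.neutral) auto
    have "\<sigma> p \<beta>0 < h" "\<sigma> q \<beta>0 < h" using \<sigma>rng b0 pq by auto
    hence "\<bar>H0 j (\<sigma> p \<beta>0)\<bar> = 1" "\<bar>H0 k (\<sigma> q \<beta>0)\<bar> = 1" using H0abs jk by auto
    thus ?thesis unfolding ipC b x by (simp add: \<psi>_def abs_mult)
  qed
  have Kpx: "\<bar>ip (Inl (p,j)) (Inr x)\<bar> = 2" if p: "p \<in> V" and x: "x < 2*h" for p j x
  proof -
    have b: "(\<Sum>\<beta>\<in>Bl. \<psi> (Inl (p,j)) (Inl \<beta>) * \<psi> (Inr x) (Inl \<beta>)) = 0" unfolding \<psi>_def by simp
    have xx: "(\<Sum>r\<in>V. \<psi> (Inl (p,j)) (Inr (Some r)) * \<psi> (Inr x) (Inr (Some r))) = 2 * W0 x (\<tau> p)"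
      unfolding \<psi>_def psi.simps by (rule sum_ifeq[OF fV p])
    have "\<tau> p < 2*h" using \<tau>rng p by fastforce
    thus ?thesis unfolding ipC b xx using W0abs x by (simp add: \<psi>_def abs_mult)
  qed
  have Kxy: "ip (Inr x) (Inr y) = (if x = y then 2*real h + 2 else 2)" if xy: "x < 2*h" "y < 2*h" for x y
  proof -
    have b: "(\<Sum>\<beta>\<in>Bl. \<psi> (Inr x) (Inl \<beta>) * \<psi> (Inr y) (Inl \<beta>)) = 0" unfolding \<psi>_def by simp
    have "(\<Sum>r\<in>V. \<psi> (Inr x) (Inr (Some r)) * \<psi> (Inr y) (Inr (Some r))) = (\<Sum>c<2*h-1. W0 x c * W0 y c)"
      unfolding \<psi>_def using sum\<tau>[of "\<lambda>c. W0 x c * W0 y c"] by simp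
    also have "\<dots> = (\<Sum>c<2*h. W0 x c * W0 y c) - 1" unfolding sum2h using W0inf xy by simp
    finally have xx: "(\<Sum>r\<in>V. \<psi> (Inr x) (Inr (Some r)) * \<psi> (Inr y) (Inr (Some r))) = (if x = y then 2 * real h else 0) - 1"
      using W0row xy by simp
    show ?thesis unfolding ipC b xx by (simp add: \<psi>_def)
  qed
  define F where "F a b = (\<Sum>i\<in>I. \<psi> i a * \<psi> i b)" for a b
  have FI: "F a b = (\<Sum>p\<in>V. \<Sum>j<h. \<psi> (Inl (p,j)) a * \<psi> (Inl (p,j)) b) + (\<Sum>x<2*h. \<psi> (Inr x) a * \<psi> (Inr x) b)" for a b
    unfolding F_def I_def by (rule sum_I[OF fV])
  have Fsym: "F a b = F b a" for a b unfolding F_def by (simp add: mult.commute)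
  have F1: "F (Inl \<beta>) (Inl \<gamma>) = (if \<beta> = \<gamma> then 6 * real h else 0)" if bg: "\<beta> \<in> Bl" "\<gamma> \<in> Bl" for \<beta> \<gamma>
  proof -
    have inner: "(\<Sum>j<h. \<psi> (Inl (p,j)) (Inl \<beta>) * \<psi> (Inl (p,j)) (Inl \<gamma>))
        = (if p \<in> \<beta> \<and> p \<in> \<gamma> then (if \<beta> = \<gamma> then 2 * real h else 0) else 0)" if p: "p \<in> V" for p
    proof (cases "p \<in> \<beta> \<and> p \<in> \<gamma>")
      case True
      have r: "\<sigma> p \<beta> < h" "\<sigma> p \<gamma> < h" using \<sigma>rng True bg p by auto
      have "(\<Sum>j<h. \<psi> (Inl (p,j)) (Inl \<beta>) * \<psi> (Inl (p,j)) (Inl \<gamma>)) = 2 * (\<Sum>j<h. H0 j (\<sigma> p \<beta>) * H0 j (\<sigma> p \<gamma>))"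
        unfolding sum_distrib_left using True by (intro sum.cong) (simp_all add: \<psi>_def sq2)
      also have "\<dots> = 2 * (if \<sigma> p \<beta> = \<sigma> p \<gamma> then real h else 0)" using H0col r by simp
      also have "\<dots> = (if \<beta> = \<gamma> then 2 * real h else 0)" using \<sigma>inj[OF p] True bg by auto
      finally show ?thesis using True by simp
    next
      case False
      thus ?thesis unfolding \<psi>_def by (auto intro: sum.neutral)
    qed
    have x: "(\<Sum>x<2*h. \<psi> (Inr x) (Inl \<beta>) * \<psi> (Inr x) (Inl \<gamma>)) = 0" unfolding \<psi>_def by simp
    have "F (Inl \<beta>) (Inl \<gamma>) = (\<Sum>p\<in>V. if p \<in> \<beta> \<and> p \<in> \<gamma> then (if \<beta> = \<gamma> then 2 * real h else 0) else 0)"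
      unfolding FI x using inner by simp
    also have "\<dots> = (if \<beta> = \<gamma> then 6 * real h else 0)"
    proof (cases "\<beta> = \<gamma>")
      case True
      have sub: "\<beta> \<subseteq> V" "card \<beta> = 3" using S bg unfolding sts_def by auto
      have "(\<Sum>p\<in>V. if p \<in> \<beta> \<and> p \<in> \<gamma> then (if \<beta> = \<gamma> then 2 * real h else 0) else 0) = (\<Sum>p\<in>V \<inter> \<beta>. 2 * real h)"
      proof -
        have "(\<Sum>p\<in>V. if p \<in> \<beta> \<and> p \<in> \<gamma> then (if \<beta> = \<gamma> then 2 * real h else 0) else 0) = (\<Sum>p\<in>V. if p \<in> \<beta> then 2 * real h else 0)"
          using True by simp
        also have "\<dots> = (\<Sum>p\<in>V \<inter> \<beta>. 2 * real h)" by (rule sum.inter_restrict[OF fV, symmetric])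
        finally show ?thesis .
      qed
      also have "\<dots> = 6 * real h" using sub by (simp add: Int_absorb1)
      finally show ?thesis using True by simp
    qed simp
    finally show ?thesis .
  qed
  have F2: "F (Inl \<beta>) (Inr (Some q)) = 0" if bq: "\<beta> \<in> Bl" "q \<in> V" for \<beta> q
  proof -
    have a: "(\<Sum>x<2*h. \<psi> (Inr x) (Inl \<beta>) * \<psi> (Inr x) (Inr (Some q))) = 0" by (simp add: \<psi>_def)
    have b: "(\<Sum>j<h. \<psi> (Inl (p,j)) (Inl \<beta>) * \<psi> (Inl (p,j)) (Inr (Some q)))
        = (if q = p then (\<Sum>j<h. \<psi> (Inl (q,j)) (Inl \<beta>) * 2) else 0)" for p
      by (cases "q = p") (simp_all add: \<psi>_def)
    have "F (Inl \<beta>) (Inr (Some q)) = (\<Sum>j<h. \<psi> (Inl (q,j)) (Inl \<beta>) * 2)"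
      unfolding FI a b using fV bq by (simp add: sum.delta')
    also have "\<dots> = 0"
    proof (cases "q \<in> \<beta>")
      case True
      have r: "\<sigma> q \<beta> < h" "\<sigma> q \<beta> \<noteq> 0" using \<sigma>rng True bq by fastforce+
      have "(\<Sum>j<h. \<psi> (Inl (q,j)) (Inl \<beta>) * 2) = 2 * sqrt 2 * (\<Sum>j<h. H0 j (\<sigma> q \<beta>) * H0 j 0)"
        unfolding sum_distrib_left using True H00 by (intro sum.cong) (simp_all add: \<psi>_def)
      also have "\<dots> = 0" using H0col[of "\<sigma> q \<beta>" 0] r h1 by simp
      finally show ?thesis .
    qed (simp add: \<psi>_def)
    finally show ?thesis .
  qed
  have F3: "F (Inl \<beta>) (Inr None) = 0" for \<beta> unfolding FI by (simp add: \<psi>_def)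
  have F4: "F (Inr (Some q)) (Inr (Some r)) = (if q = r then 6 * real h else 0)" if qr: "q \<in> V" "r \<in> V" for q r
  proof -
    have a: "(\<Sum>p\<in>V. \<Sum>j<h. \<psi> (Inl (p,j)) (Inr (Some q)) * \<psi> (Inl (p,j)) (Inr (Some r))) = (if q = r then 4 * real h else 0)"
    proof -
      have "(\<Sum>j<h. \<psi> (Inl (p,j)) (Inr (Some q)) * \<psi> (Inl (p,j)) (Inr (Some r))) = (if p = q then (if q = r then 4 * real h else 0) else 0)" for p
        by (simp add: \<psi>_def)
      thus ?thesis using fV qr by (simp add: sum.delta)
    qed
    have t: "\<tau> q < 2*h" "\<tau> r < 2*h" using \<tau>rng qr by fastforce+
    have b: "(\<Sum>x<2*h. \<psi> (Inr x) (Inr (Some q)) * \<psi> (Inr x) (Inr (Some r))) = (if q = r then 2 * real h else 0)"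
      unfolding \<psi>_def using W0col[OF t] \<tau>inj[OF qr] by auto
    show ?thesis unfolding FI a b by simp
  qed
  have F5: "F (Inr (Some q)) (Inr None) = 0" if q: "q \<in> V" for q
  proof -
    have t: "\<tau> q < 2*h" "\<tau> q \<noteq> 2*h-1" using \<tau>rng q by fastforce+
    have "(\<Sum>x<2*h. \<psi> (Inr x) (Inr (Some q)) * \<psi> (Inr x) (Inr None)) = sqrt 3 * (\<Sum>x<2*h. W0 x (\<tau> q) * W0 x (2*h-1))"
      unfolding sum_distrib_left using W0inf by (intro sum.cong) (simp_all add: \<psi>_def)
    also have "\<dots> = 0" using W0col[of "\<tau> q" "2*h-1"] t h1 by simp
    finally show ?thesis unfolding FI by (simp add: \<psi>_def)
  qed
  have F6: "F (Inr None) (Inr None) = 6 * real h" unfolding FI by (simp add: \<psi>_def)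
  have memI: "i \<in> I \<Longrightarrow> (\<exists>p j. p \<in> V \<and> j < h \<and> i = Inl (p,j)) \<or> (\<exists>x. x < 2*h \<and> i = Inr x)" for i
    unfolding I_def by auto
  have memC: "a \<in> C \<Longrightarrow> (\<exists>\<beta>. \<beta> \<in> Bl \<and> a = Inl \<beta>) \<or> (\<exists>q. q \<in> V \<and> a = Inr (Some q)) \<or> a = Inr None" for a
    unfolding C_def by auto
  have nz: "\<forall>i\<in>I. \<exists>a\<in>C. \<psi> i a \<noteq> 0"
  proof
    fix i assume "i \<in> I"
    then consider p j where "p \<in> V" "i = Inl (p,j)" | x where "i = Inr x" using memI by blast
    thus "\<exists>a\<in>C. \<psi> i a \<noteq> 0"
    proof cases
      case 1
      thus ?thesis by (intro bexI[of _ "Inr (Some p)"]) (auto simp: \<psi>_def C_def)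
    next
      case 2
      thus ?thesis by (intro bexI[of _ "Inr None"]) (auto simp: \<psi>_def C_def)
    qed
  qed
  have nrm: "\<forall>i\<in>I. (\<Sum>a\<in>C. \<psi> i a * \<psi> i a) = 2 * real h + 2"
  proof
    fix i assume "i \<in> I"
    then consider p j where "p \<in> V" "j < h" "i = Inl (p,j)" | x where "x < 2*h" "i = Inr x" using memI by blast
    thus "(\<Sum>a\<in>C. \<psi> i a * \<psi> i a) = 2 * real h + 2"
    proof cases
      case 1 thus ?thesis using Kpp[of p j j] unfolding ip_def by simp
    next
      case 2 thus ?thesis using Kxy[of x x] unfolding ip_def by simp
    qed
  qed
  have ang: "\<forall>i\<in>I. \<forall>i'\<in>I. i \<noteq> i' \<longrightarrow> \<bar>\<Sum>a\<in>C. \<psi> i a * \<psi> i' a\<bar> = 2"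
  proof (intro ballI impI)
    fix i i' assume ii: "i \<in> I" "i' \<in> I" "i \<noteq> i'"
    have "\<bar>ip i i'\<bar> = 2"
    proof -
      from memI[OF ii(1)] memI[OF ii(2)] show ?thesis
      proof (elim disjE exE conjE)
        fix p j q k assume *: "p \<in> V" "j < h" "i = Inl (p,j)" "q \<in> V" "k < h" "i' = Inl (q,k)"
        show ?thesis
        proof (cases "p = q")
          case True thus ?thesis using * ii(3) Kpp[of p j k] by auto
        next
          case False thus ?thesis using * Kpq by auto
        qed
      next
        fix p j x assume *: "p \<in> V" "j < h" "i = Inl (p,j)" "x < 2*h" "i' = Inr x"
        thus ?thesis using Kpx by auto
      next
        fix p j x assume *: "p \<in> V" "j < h" "i' = Inl (p,j)" "x < 2*h" "i = Inr x"
        thus ?thesis using Kpx ipsym by metis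
      next
        fix x y assume *: "x < 2*h" "i = Inr x" "y < 2*h" "i' = Inr y"
        thus ?thesis using Kxy ii(3) by auto
      qed
    qed
    thus "\<bar>\<Sum>a\<in>C. \<psi> i a * \<psi> i' a\<bar> = 2" unfolding ip_def .
  qed
  have tight: "\<forall>a\<in>C. \<forall>b\<in>C. (\<Sum>i\<in>I. \<psi> i a * \<psi> i b) = (if a = b then 6 * real h else 0)"
  proof (intro ballI)
    fix a b assume ab: "a \<in> C" "b \<in> C"
    have "F a b = (if a = b then 6 * real h else 0)"
    proof -
      from memC[OF ab(1)] memC[OF ab(2)] show ?thesis
      proof (elim disjE exE conjE)
        fix \<beta> \<gamma> assume "\<beta> \<in> Bl" "a = Inl \<beta>" "\<gamma> \<in> Bl" "b = Inl \<gamma>"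
        thus ?thesis using F1 by auto
      next
        fix \<beta> q assume "\<beta> \<in> Bl" "a = Inl \<beta>" "q \<in> V" "b = Inr (Some q)"
        thus ?thesis using F2 by auto
      next
        fix \<beta> assume "\<beta> \<in> Bl" "a = Inl \<beta>" "b = Inr None"
        thus ?thesis using F3 by auto
      next
        fix \<beta> q assume "\<beta> \<in> Bl" "b = Inl \<beta>" "q \<in> V" "a = Inr (Some q)"
        thus ?thesis using F2 Fsym by auto
      next
        fix q r assume "q \<in> V" "a = Inr (Some q)" "r \<in> V" "b = Inr (Some r)"
        thus ?thesis using F4 by auto
      next
        fix q assume "q \<in> V" "a = Inr (Some q)" "b = Inr None"
        thus ?thesis using F5 by auto
      next
        fix \<beta> assume "\<beta> \<in> Bl" "b = Inl \<beta>" "a = Inr None"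
        thus ?thesis using F3 Fsym by auto
      next
        fix q assume "q \<in> V" "b = Inr (Some q)" "a = Inr None"
        thus ?thesis using F5 Fsym by auto
      next
        assume "a = Inr None" "b = Inr None"
        thus ?thesis using F6 by auto
      qed
    qed
    thus "(\<Sum>i\<in>I. \<psi> i a * \<psi> i b) = (if a = b then 6 * real h else 0)" unfolding F_def .
  qed
  obtain phi where "is_ETF (card C) (h*(2*h+1)) phi"
    using etf_transfer[OF fI fC cI refl nz nrm ang tight] by blast
  thus ?thesis using cC by blast
qed



definition bR :: "nat \<Rightarrow> nat \<Rightarrow> nat \<Rightarrow> nat \<Rightarrow> bool" where
  "bR m x y z \<longleftrightarrow> (2*z) mod m = (x+y) mod m"

lemma bR_sym: "bR m x y z = bR m y x z" unfolding bR_def by (simp add: add.commute)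

lemma two_cancel:
  fixes m z z' :: nat
  assumes "odd m" "z < m" "z' < m" "(2*z) mod m = (2*z') mod m"
  shows "z = z'"
proof -
  have main: "a = b" if ab: "b \<le> a" "a < m" "(2*a) mod m = (2*b) mod m" for a b :: nat
  proof -
    have "m dvd (2*a - 2*b)" using ab mod_eq_dvd_iff_nat[of "2*b" "2*a" m] by simp
    hence "m dvd 2*(a-b)" by (simp add: diff_mult_distrib2)
    moreover have "coprime m 2" using \<open>odd m\<close> by (simp add: coprime_commute)
    ultimately have "m dvd (a-b)" using coprime_dvd_mult_right_iff by blast
    moreover have "a - b < m" using ab by simp
    ultimately have "a - b = 0" using dvd_imp_le by (metis gr0I leD)
    thus ?thesis using ab by simp
  qed
  show ?thesis
  proof (cases "z' \<le> z")
    case True thus ?thesis using main assms by simp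
  next
    case False thus ?thesis using main[of z z'] assms by simp
  qed
qed

lemma add_cancel_mod:
  fixes m x y y' :: nat
  assumes "y < m" "y' < m" "(x+y) mod m = (x+y') mod m"
  shows "y = y'"
proof -
  have main: "a = b" if ab: "b \<le> a" "a < m" "(x+a) mod m = (x+b) mod m" for a b :: nat
  proof -
    have "m dvd ((x+a) - (x+b))" using ab mod_eq_dvd_iff_nat[of "x+b" "x+a" m] by simp
    hence "m dvd (a-b)" by simp
    moreover have "a - b < m" using ab by simp
    ultimately have "a - b = 0" using dvd_imp_le by (metis gr0I leD)
    thus ?thesis using ab by simp
  qed
  show ?thesis
  proof (cases "y' \<le> y")
    case True thus ?thesis using main assms by simp
  next
    case False thus ?thesis using main[of y y'] assms by simp
  qed
qed

lemma bR_fun: "odd m \<Longrightarrow> z < m \<Longrightarrow> z' < m \<Longrightarrow> bR m x y z \<Longrightarrow> bR m x y z' \<Longrightarrow> z = z'"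
  unfolding bR_def using two_cancel by metis

lemma bR_inv: "y < m \<Longrightarrow> y' < m \<Longrightarrow> bR m x y z \<Longrightarrow> bR m x y' z \<Longrightarrow> y = y'"
  unfolding bR_def using add_cancel_mod by metis

lemma bR_diag: "odd m \<Longrightarrow> x < m \<Longrightarrow> z < m \<Longrightarrow> bR m x x z \<Longrightarrow> z = x"
  unfolding bR_def using two_cancel by (metis mult_2)

lemma bR_ex: assumes "odd m" shows "\<exists>z<m. bR m x y z"
proof -
  obtain n where n: "m = 2*n+1" using assms oddE by blast
  define z where "z = ((x+y)*(n+1)) mod m"
  have "z < m" using n unfolding z_def by simp
  moreover have "(2*z) mod m = (x+y) mod m"
  proof -
    have "(2*z) mod m = (2*((x+y)*(n+1))) mod m" unfolding z_def by (simp add: mod_mult_right_eq)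
    also have "2*((x+y)*(n+1)) = (x+y)*m + (x+y)" using n by (simp add: algebra_simps)
    also have "\<dots> mod m = (x+y) mod m" by simp
    finally show ?thesis .
  qed
  ultimately show ?thesis unfolding bR_def by blast
qed

lemma bR_ex2: assumes "x < m" shows "\<exists>y<m. bR m x y z"
proof -
  define y where "y = (2*z + (m - x)) mod m"
  have m0: "m > 0" using assms by simp
  have "y < m" using m0 unfolding y_def by simp
  moreover have "(x+y) mod m = (2*z) mod m"
  proof -
    have "(x+y) mod m = (x + (2*z + (m - x))) mod m" unfolding y_def by (simp add: mod_add_right_eq)
    also have "x + (2*z + (m - x)) = 2*z + m" using assms by simp
    finally show ?thesis by simp
  qed
  ultimately show ?thesis unfolding bR_def by metis
qed



definition bpts :: "nat \<Rightarrow> (nat \<times> nat) set" where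
  "bpts m = {..<m} \<times> {..<3}"

definition bblocks :: "nat \<Rightarrow> (nat \<times> nat) set set" where
  "bblocks m = {{(x,0),(x,1),(x,2)} | x. x < m} \<union>
     {{(x,i),(y,i),(z, Suc i mod 3)} | x y z i. x < m \<and> y < m \<and> z < m \<and> i < 3 \<and> x \<noteq> y \<and> bR m x y z}"

lemma less3: "i < (3::nat) \<Longrightarrow> i = 0 \<or> i = 1 \<or> i = 2" by auto
lemma suc3: "i < 3 \<Longrightarrow> Suc i mod 3 \<noteq> i" using less3[of i] by auto
lemma suc3b: "i < 3 \<Longrightarrow> Suc (Suc i mod 3) mod 3 \<noteq> i" using less3[of i] by (auto simp: mod_Suc)

lemma bblocksE:
  assumes "\<beta> \<in> bblocks m"
  obtains (T1) a where "a < m" "\<beta> = {(a,0),(a,1),(a,2)}"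
    | (T2) a b c l where "a < m" "b < m" "c < m" "l < 3" "a \<noteq> b" "bR m a b c" "\<beta> = {(a,l),(b,l),(c, Suc l mod 3)}"
  using assms unfolding bblocks_def by blast

lemma same_level:
  assumes m: "odd m" and xy: "x \<noteq> y" "x < m" "y < m" "i < 3" and z: "bR m x y z" "z < m"
    and \<beta>: "\<beta> \<in> bblocks m" "(x,i) \<in> \<beta>" "(y,i) \<in> \<beta>"
  shows "\<beta> = {(x,i),(y,i),(z,Suc i mod 3)}"
  using \<beta>(1)
proof (cases rule: bblocksE)
  case (T1 a)
  have "x = a" "y = a" using \<beta>(2,3) T1(2) by auto
  hence False using xy by simp
  thus ?thesis ..
next
  case (T2 a b c l)
  have sl: "Suc l mod 3 \<noteq> l" using suc3 T2 by blast
  show ?thesis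
  proof (cases "i = l")
    case True
    hence "x \<in> {a,b}" "y \<in> {a,b}" using \<beta> T2 sl by auto
    hence "(x = a \<and> y = b) \<or> (x = b \<and> y = a)" using xy by auto
    moreover have "bR m a b z" using z calculation bR_sym by auto
    hence "c = z" using bR_fun[OF m] T2 z by blast
    ultimately show ?thesis using T2(7) True
    proof (elim disjE conjE)
      assume "x = a" "y = b" "c = z" thus ?thesis using T2(7) True by simp
    next
      assume "x = b" "y = a" "c = z" thus ?thesis using T2(7) True by (simp add: insert_commute)
    qed
  next
    case False
    hence "x = c" "y = c" using \<beta>(2,3) T2(7) by auto
    hence False using xy by simp
    thus ?thesis ..
  qed
qed

lemma adj_same:
  assumes m: "odd m" and x: "x < m" "i < 3"
    and \<beta>: "\<beta> \<in> bblocks m" "(x,i) \<in> \<beta>" "(x,Suc i mod 3) \<in> \<beta>"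
  shows "\<beta> = {(x,0),(x,1),(x,2)}"
  using \<beta>(1)
proof (cases rule: bblocksE)
  case (T1 a)
  have "x = a" using \<beta>(2) T1(2) by auto
  thus ?thesis using T1(2) by simp
next
  case (T2 a b c l)
  have sl: "Suc l mod 3 \<noteq> l" using suc3 T2 by blast
  have si: "Suc i mod 3 \<noteq> i" using suc3 x by blast
  have ssl: "Suc (Suc l mod 3) mod 3 \<noteq> l" using suc3b T2 by blast
  have m1: "(i = l \<and> (x = a \<or> x = b)) \<or> (x = c \<and> i = Suc l mod 3)" using \<beta>(2) T2(7) by blast
  have m2: "(Suc i mod 3 = l \<and> (x = a \<or> x = b)) \<or> (x = c \<and> Suc i mod 3 = Suc l mod 3)" using \<beta>(3) T2(7) by blast
  have xc: "x = c"
  proof (cases "i = l")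
    case True thus ?thesis using m2 sl by auto
  next
    case False thus ?thesis using m1 by auto
  qed
  have xab: "x = a \<or> x = b"
  proof (cases "i = l")
    case True thus ?thesis using m1 sl by auto
  next
    case False
    hence "i = Suc l mod 3" using m1 by auto
    hence "Suc i mod 3 \<noteq> Suc l mod 3" using si by auto
    thus ?thesis using m2 by auto
  qed
  have False
  proof (cases "x = a")
    case True
    have "bR m a b a" using T2(6) xc True by simp
    moreover have "bR m a a a" unfolding bR_def by (simp add: mult_2)
    ultimately have "b = a" using bR_inv[of b m a a a] T2 by blast
    thus False using T2(5) by simp
  next
    case False
    hence xb: "x = b" using xab by simp
    have "bR m b a b" using T2(6) xc xb bR_sym by metis
    moreover have "bR m b b b" unfolding bR_def by (simp add: mult_2)
    ultimately have "a = b" using bR_inv[of a m b b b] T2 by blast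
    thus False using T2(5) by simp
  qed
  thus ?thesis ..
qed


lemma adj_diff:
  assumes m: "odd m" and xy: "x \<noteq> y" "x < m" "y < m" "w < m" "i < 3" and R: "bR m x w y"
    and \<beta>: "\<beta> \<in> bblocks m" "(x,i) \<in> \<beta>" "(y,Suc i mod 3) \<in> \<beta>"
  shows "\<beta> = {(x,i),(w,i),(y,Suc i mod 3)}"
  using \<beta>(1)
proof (cases rule: bblocksE)
  case (T1 a)
  have "x = a" "y = a" using \<beta>(2,3) T1(2) by auto
  hence False using xy by simp
  thus ?thesis ..
next
  case (T2 a b c l)
  have sl: "Suc l mod 3 \<noteq> l" using suc3 T2 by blast
  have si: "Suc i mod 3 \<noteq> i" using suc3 xy by blast
  have ssl: "Suc (Suc l mod 3) mod 3 \<noteq> l" using suc3b T2 by blast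
  have m1: "(i = l \<and> (x = a \<or> x = b)) \<or> (x = c \<and> i = Suc l mod 3)" using \<beta>(2) T2(7) by blast
  have m2: "(Suc i mod 3 = l \<and> (y = a \<or> y = b)) \<or> (y = c \<and> Suc i mod 3 = Suc l mod 3)" using \<beta>(3) T2(7) by blast
  show ?thesis
  proof (cases "i = l")
    case True
    hence yc: "y = c" using m2 si by auto
    have xab: "x = a \<or> x = b" using m1 True sl by auto
    show ?thesis
    proof (cases "x = a")
      case True
      have "bR m x b y" using T2(6) True yc by simp
      hence "b = w" using bR_inv[of b m w x y] R T2 xy by blast
      thus ?thesis using T2(7) True yc \<open>i = l\<close> by simp
    next
      case False
      hence xb: "x = b" using xab by simp
      have "bR m x a y" using T2(6) xb yc bR_sym by metis
      hence "a = w" using bR_inv[of a m w x y] R T2 xy by blast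
      thus ?thesis using T2(7) xb yc \<open>i = l\<close> by (simp add: insert_commute)
    qed
  next
    case False
    hence "i = Suc l mod 3" using m1 by auto
    hence False using m2 si ssl by auto
    thus ?thesis ..
  qed
qed

lemma T1_mem: "u < m \<Longrightarrow> {(u,0),(u,1),(u,2)} \<in> bblocks m"
  unfolding bblocks_def by (rule UnI1) blast

lemma T2_mem:
  assumes "x < m" "y < m" "z < m" "i < 3" "x \<noteq> y" "bR m x y z"
  shows "{(x,i),(y,i),(z,Suc i mod 3)} \<in> bblocks m"
  unfolding bblocks_def
  apply (rule UnI2)
  apply (simp only: mem_Collect_eq)
  apply (rule exI[of _ x], rule exI[of _ y], rule exI[of _ z], rule exI[of _ i])
  using assms by simp

lemma card3: "a \<noteq> b \<Longrightarrow> a \<noteq> c \<Longrightarrow> b \<noteq> c \<Longrightarrow> card {a,b,c} = 3" by simp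

lemma bose_B:
  assumes "\<beta> \<in> bblocks m"
  shows "\<beta> \<subseteq> bpts m \<and> card \<beta> = 3"
  using assms
proof (cases rule: bblocksE)
  case (T1 a)
  have "card \<beta> = 3" using T1(2) by (simp add: card3)
  thus ?thesis using T1 unfolding bpts_def by auto
next
  case (T2 a b c l)
  have sl: "Suc l mod 3 \<noteq> l" using suc3 T2 by blast
  have "card \<beta> = 3" using T2 sl by (simp add: card3)
  moreover have "Suc l mod 3 < 3" by simp
  ultimately show ?thesis using T2 unfolding bpts_def by auto
qed

lemma adj_case:
  assumes m: "odd m" and uv: "u < m" "v < m" "k < 3"
  shows "\<exists>\<beta>0. \<beta>0 \<in> bblocks m \<and> (u,k) \<in> \<beta>0 \<and> (v,Suc k mod 3) \<in> \<beta>0 \<and>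
        (\<forall>\<beta>. \<beta> \<in> bblocks m \<and> (u,k) \<in> \<beta> \<and> (v,Suc k mod 3) \<in> \<beta> \<longrightarrow> \<beta> = \<beta>0)"
proof (cases "u = v")
  case True
  show ?thesis
  proof (intro exI[of _ "{(u,0),(u,1),(u,2)}"] conjI allI impI)
    show "{(u,0),(u,1),(u,2)} \<in> bblocks m" using T1_mem uv by blast
    show "(u,k) \<in> {(u,0),(u,1),(u,2)}" using uv less3[of k] by auto
    show "(v,Suc k mod 3) \<in> {(u,0),(u,1),(u,2)}" using True uv less3[of k] by auto
    fix \<beta> assume "\<beta> \<in> bblocks m \<and> (u,k) \<in> \<beta> \<and> (v,Suc k mod 3) \<in> \<beta>"
    thus "\<beta> = {(u,0),(u,1),(u,2)}" using adj_same[OF m uv(1) uv(3)] True by blast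
  qed
next
  case False
  obtain w where w: "w < m" "bR m u w v" using bR_ex2[of u m v] uv by blast
  have wu: "u \<noteq> w"
  proof
    assume "u = w"
    hence "v = u" using bR_diag[OF m] w uv by blast
    thus False using False by simp
  qed
  show ?thesis
  proof (intro exI[of _ "{(u,k),(w,k),(v,Suc k mod 3)}"] conjI allI impI)
    show "{(u,k),(w,k),(v,Suc k mod 3)} \<in> bblocks m" using T2_mem[OF uv(1) w(1) uv(2) uv(3) wu w(2)] .
    show "(u,k) \<in> {(u,k),(w,k),(v,Suc k mod 3)}" by simp
    show "(v,Suc k mod 3) \<in> {(u,k),(w,k),(v,Suc k mod 3)}" by simp
    fix \<beta> assume "\<beta> \<in> bblocks m \<and> (u,k) \<in> \<beta> \<and> (v,Suc k mod 3) \<in> \<beta>"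
    thus "\<beta> = {(u,k),(w,k),(v,Suc k mod 3)}" using adj_diff[OF m False uv(1,2) w(1) uv(3) w(2)] by blast
  qed
qed



lemma bose_sts:
  assumes m: "odd m"
  shows "sts (bpts m) (bblocks m)"
proof -
  have A: "finite (bpts m)" unfolding bpts_def by simp
  have C: "\<exists>!\<beta>. \<beta> \<in> bblocks m \<and> p \<in> \<beta> \<and> q \<in> \<beta>" if pq: "p \<in> bpts m" "q \<in> bpts m" "p \<noteq> q" for p q
  proof -
    obtain x i where p: "p = (x,i)" "x < m" "i < 3" using pq unfolding bpts_def by auto
    obtain y j where q: "q = (y,j)" "y < m" "j < 3" using pq unfolding bpts_def by auto
    have ij: "i = j \<or> j = Suc i mod 3 \<or> i = Suc j mod 3" using p q less3[of i] less3[of j] by auto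
    have key: "\<exists>\<beta>0. \<beta>0 \<in> bblocks m \<and> p \<in> \<beta>0 \<and> q \<in> \<beta>0 \<and> (\<forall>\<beta>. \<beta> \<in> bblocks m \<and> p \<in> \<beta> \<and> q \<in> \<beta> \<longrightarrow> \<beta> = \<beta>0)"
      using ij
    proof (elim disjE)
      assume "i = j"
      hence xy: "x \<noteq> y" using pq p q by auto
      obtain z where z: "z < m" "bR m x y z" using bR_ex[OF m] by blast
      show ?thesis
      proof (intro exI[of _ "{(x,i),(y,i),(z,Suc i mod 3)}"] conjI allI impI)
        show "{(x,i),(y,i),(z,Suc i mod 3)} \<in> bblocks m" using T2_mem[OF p(2) q(2) z(1) p(3) xy z(2)] .
        show "p \<in> {(x,i),(y,i),(z,Suc i mod 3)}" using p by simp
        show "q \<in> {(x,i),(y,i),(z,Suc i mod 3)}" using q \<open>i = j\<close> by simp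
        fix \<beta> assume "\<beta> \<in> bblocks m \<and> p \<in> \<beta> \<and> q \<in> \<beta>"
        thus "\<beta> = {(x,i),(y,i),(z,Suc i mod 3)}"
          using same_level[OF m xy p(2) q(2) p(3) z(2) z(1)] \<open>i = j\<close> p q by blast
      qed
    next
      assume "j = Suc i mod 3"
      thus ?thesis using adj_case[OF m p(2) q(2) p(3)] p q by blast
    next
      assume "i = Suc j mod 3"
      thus ?thesis using adj_case[OF m q(2) p(2) q(3)] p q by blast
    qed
    thus ?thesis by blast
  qed
  show ?thesis unfolding sts_def using A bose_B C by blast
qed

lemma bose_card: "card (bpts m) = 3 * m" unfolding bpts_def by (simp add: card_cartesian_product)



definition dF :: "nat \<Rightarrow> nat \<Rightarrow> nat \<Rightarrow> nat \<Rightarrow> bool" where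
  "dF w i a b \<longleftrightarrow> a \<le> w \<and> b \<le> w \<and> a \<noteq> b \<and>
     ((a = w \<and> b = i) \<or> (b = w \<and> a = i) \<or> (a < w \<and> b < w \<and> bR w a b i))"

lemma dF_sym: "dF w i a b = dF w i b a"
  unfolding dF_def using bR_sym by blast

lemma dF_partner:
  assumes w: "odd w" and i: "i < w" and a: "a \<le> w"
  shows "\<exists>b. dF w i a b"
proof -
  consider "a = w" | "a = i" | "a < w" "a \<noteq> i" using a by linarith
  thus ?thesis
  proof cases
    case 1 thus ?thesis using i unfolding dF_def by (intro exI[of _ i]) auto
  next
    case 2 thus ?thesis using i unfolding dF_def by (intro exI[of _ w]) auto
  next
    case 3
    obtain b where b: "b < w" "bR w a b i" using bR_ex2[of a w i] 3 by blast
    have "b \<noteq> a"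
    proof
      assume "b = a"
      hence "i = a" using bR_diag[OF w] b i 3 by blast
      thus False using 3 by simp
    qed
    thus ?thesis using 3 b unfolding dF_def by (intro exI[of _ b]) auto
  qed
qed

lemma dF_partner_uniq:
  assumes w: "odd w" and i: "i < w" and F: "dF w i a b" "dF w i a b'"
  shows "b = b'"
proof -
  have iii: "bR w i i i" unfolding bR_def by (simp add: mult_2)
  have notself: "\<not> bR w i c i" if "c < w" "c \<noteq> i" for c
    using bR_inv[of c w i i i] that iii i by auto
  consider "a = w" | "a = i" | "a < w" "a \<noteq> i" using F unfolding dF_def by linarith
  thus ?thesis
  proof cases
    case 1 thus ?thesis using F i unfolding dF_def by auto
  next
    case 2 thus ?thesis using F i notself unfolding dF_def by auto
  next
    case 3
    hence "b < w" "b' < w" "bR w a b i" "bR w a b' i" using F unfolding dF_def by auto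
    thus ?thesis using bR_inv by blast
  qed
qed

lemma dF_factor:
  assumes w: "odd w" and ab: "a \<le> w" "b \<le> w" "a \<noteq> b"
  shows "\<exists>i<w. dF w i a b" and "i < w \<Longrightarrow> i' < w \<Longrightarrow> dF w i a b \<Longrightarrow> dF w i' a b \<Longrightarrow> i = i'"
proof -
  consider "a = w" | "b = w" | "a < w" "b < w" using ab by linarith
  thus "\<exists>i<w. dF w i a b"
  proof cases
    case 1 thus ?thesis using ab unfolding dF_def by (intro exI[of _ b]) auto
  next
    case 2 thus ?thesis using ab unfolding dF_def by (intro exI[of _ a]) auto
  next
    case 3
    obtain i where "i < w" "bR w a b i" using bR_ex[OF w] by blast
    thus ?thesis using 3 ab unfolding dF_def by auto
  qed
next
  assume ii: "i < w" "i' < w" "dF w i a b" "dF w i' a b"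
  consider "a = w" | "b = w" | "a < w" "b < w" using ab by linarith
  thus "i = i'"
  proof cases
    case 1 thus ?thesis using ii unfolding dF_def by auto
  next
    case 2 thus ?thesis using ii unfolding dF_def by auto
  next
    case 3
    hence "bR w a b i" "bR w a b i'" using ii unfolding dF_def by auto
    thus ?thesis using bR_fun[OF w] ii by blast
  qed
qed



lemma ex1_swap:
  assumes "\<exists>!\<beta>. P \<beta> \<and> x \<in> \<beta> \<and> y \<in> \<beta>"
  shows "\<exists>!\<beta>. P \<beta> \<and> y \<in> \<beta> \<and> x \<in> \<beta>"
proof -
  from assms obtain b where b: "P b \<and> x \<in> b \<and> y \<in> b" and u: "\<And>c. P c \<and> x \<in> c \<and> y \<in> c \<Longrightarrow> c = b" by blast
  show ?thesis
  proof (rule ex1I[of _ b])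
    show "P b \<and> y \<in> b \<and> x \<in> b" using b by blast
    fix c assume "P c \<and> y \<in> c \<and> x \<in> c" thus "c = b" using u by blast
  qed
qed

lemma sts_double:
  fixes V :: "'a set" and Bl :: "'a set set"
  assumes S: "sts V Bl" and w: "odd (card V)"
  shows "\<exists>(V'::('a + nat) set) Bl'. sts V' Bl' \<and> card V' = 2 * card V + 1"
proof -
  define w where "w = card V"
  have wo: "odd w" using w w_def by simp
  have fV: "finite V" using S unfolding sts_def by auto
  obtain \<tau> where \<tau>: "bij_betw \<tau> V {..<w}"
    using ex_bij_betw_finite_nat[OF fV] w_def by (metis lessThan_atLeast0)
  have \<tau>rng: "p \<in> V \<Longrightarrow> \<tau> p < w" for p using \<tau> unfolding bij_betw_def by blast
  have \<tau>inj: "p \<in> V \<Longrightarrow> q \<in> V \<Longrightarrow> \<tau> p = \<tau> q \<Longrightarrow> p = q" for p q using \<tau> unfolding bij_betw_def inj_on_def by blast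
  have \<tau>surj: "i < w \<Longrightarrow> \<exists>p\<in>V. \<tau> p = i" for i using \<tau> unfolding bij_betw_def by (metis image_iff lessThan_iff)
  define V' :: "('a + nat) set" where "V' = Inl ` V \<union> Inr ` {..w}"
  define Bo :: "('a + nat) set set" where "Bo = (\<lambda>\<beta>. Inl ` \<beta>) ` Bl"
  define Bn :: "('a + nat) set set" where "Bn = {{Inl p, Inr a, Inr b} | p a b. p \<in> V \<and> dF w (\<tau> p) a b}"
  have BoE: "\<beta> \<in> Bo \<Longrightarrow> \<exists>\<gamma>\<in>Bl. \<beta> = Inl ` \<gamma>" for \<beta> unfolding Bo_def by blast
  have BnE: "\<beta> \<in> Bn \<Longrightarrow> \<exists>p a b. p \<in> V \<and> dF w (\<tau> p) a b \<and> \<beta> = {Inl p, Inr a, Inr b}" for \<beta> unfolding Bn_def by blast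
  have BnI: "p \<in> V \<Longrightarrow> dF w (\<tau> p) a b \<Longrightarrow> {Inl p, Inr a, Inr b} \<in> Bn" for p a b unfolding Bn_def by blast
  have A: "finite V'" unfolding V'_def using fV by simp
  have cV': "card V' = 2 * card V + 1"
  proof -
    have "card V' = card (Inl ` V :: ('a + nat) set) + card (Inr ` {..w} :: ('a + nat) set)"
      unfolding V'_def using fV by (intro card_Un_disjoint) auto
    also have "\<dots> = card V + (w + 1)" by (simp add: card_image)
    finally show ?thesis using w_def by simp
  qed
  have B: "\<beta> \<subseteq> V' \<and> card \<beta> = 3" if hb: "\<beta> \<in> Bo \<union> Bn" for \<beta>
  proof (cases "\<beta> \<in> Bo")
    case True
    then obtain \<gamma> where g: "\<gamma> \<in> Bl" "\<beta> = Inl ` \<gamma>" using BoE by blast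
    have "\<gamma> \<subseteq> V" "card \<gamma> = 3" using S g unfolding sts_def by auto
    thus ?thesis using g unfolding V'_def by (auto simp: card_image)
  next
    case False
    then obtain p a b where pab: "p \<in> V" "dF w (\<tau> p) a b" "\<beta> = {Inl p, Inr a, Inr b}" using BnE hb by blast
    have "a \<le> w" "b \<le> w" "a \<noteq> b" using pab(2) unfolding dF_def by auto
    thus ?thesis using pab unfolding V'_def by auto
  qed
  have C: "\<exists>!\<beta>. \<beta> \<in> Bo \<union> Bn \<and> u \<in> \<beta> \<and> v \<in> \<beta>" if uv: "u \<in> V'" "v \<in> V'" "u \<noteq> v" for u v
  proof -
    have case_ll: "\<exists>!\<beta>. \<beta> \<in> Bo \<union> Bn \<and> Inl p \<in> \<beta> \<and> Inl q \<in> \<beta>" if pq: "p \<in> V" "q \<in> V" "p \<noteq> q" for p q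
    proof -
      obtain \<gamma> where g: "\<gamma> \<in> Bl" "p \<in> \<gamma>" "q \<in> \<gamma>" using S pq unfolding sts_def by blast
      show ?thesis
      proof (rule ex1I[of _ "Inl ` \<gamma>"])
        show "Inl ` \<gamma> \<in> Bo \<union> Bn \<and> Inl p \<in> Inl ` \<gamma> \<and> Inl q \<in> Inl ` \<gamma>" using g unfolding Bo_def by auto
      next
        fix \<beta> assume \<beta>: "\<beta> \<in> Bo \<union> Bn \<and> Inl p \<in> \<beta> \<and> Inl q \<in> \<beta>"
        show "\<beta> = Inl ` \<gamma>"
        proof (cases "\<beta> \<in> Bo")
          case True
          then obtain \<delta> where d: "\<delta> \<in> Bl" "\<beta> = Inl ` \<delta>" using BoE by blast
          hence "p \<in> \<delta>" "q \<in> \<delta>" using \<beta> by auto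
          hence "\<delta> = \<gamma>" using sts_uniq[OF S pq d(1) g(1)] g by blast
          thus ?thesis using d by simp
        next
          case False
          then obtain p' a b where "\<beta> = {Inl p', Inr a, Inr b}" using BnE \<beta> by blast
          hence "p = p'" "q = p'" using \<beta> by auto
          thus ?thesis using pq by simp
        qed
      qed
    qed
    have case_lr: "\<exists>!\<beta>. \<beta> \<in> Bo \<union> Bn \<and> Inl p \<in> \<beta> \<and> Inr a \<in> \<beta>" if pa: "p \<in> V" "a \<le> w" for p a
    proof -
      have i: "\<tau> p < w" using \<tau>rng pa by blast
      obtain b where b: "dF w (\<tau> p) a b" using dF_partner[OF wo i pa(2)] by blast
      show ?thesis
      proof (rule ex1I[of _ "{Inl p, Inr a, Inr b}"])
        show "{Inl p, Inr a, Inr b} \<in> Bo \<union> Bn \<and> Inl p \<in> {Inl p, Inr a, Inr b} \<and> Inr a \<in> {Inl p, Inr a, Inr b}"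
          using BnI[OF pa(1) b] by simp
      next
        fix \<beta> assume \<beta>: "\<beta> \<in> Bo \<union> Bn \<and> Inl p \<in> \<beta> \<and> Inr a \<in> \<beta>"
        show "\<beta> = {Inl p, Inr a, Inr b}"
        proof (cases "\<beta> \<in> Bo")
          case True
          then obtain \<delta> where d: "\<beta> = Inl ` \<delta>" using BoE by blast
          thus ?thesis using \<beta> by auto
        next
          case False
          then obtain p' a' b' where pab: "p' \<in> V" "dF w (\<tau> p') a' b'" "\<beta> = {Inl p', Inr a', Inr b'}" using BnE \<beta> by blast
          have pp: "p' = p" using pab(3) \<beta> by auto
          have "a = a' \<or> a = b'" using pab(3) \<beta> by auto
          thus ?thesis
          proof
            assume "a = a'"
            hence "b' = b" using dF_partner_uniq[OF wo i] pab(2) pp b by blast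
            thus ?thesis using pab(3) pp \<open>a = a'\<close> by simp
          next
            assume "a = b'"
            hence "dF w (\<tau> p) a a'" using pab(2) pp dF_sym by metis
            hence "a' = b" using dF_partner_uniq[OF wo i] b by blast
            thus ?thesis using pab(3) pp \<open>a = b'\<close> by (simp add: insert_commute)
          qed
        qed
      qed
    qed
    have case_rr: "\<exists>!\<beta>. \<beta> \<in> Bo \<union> Bn \<and> Inr a \<in> \<beta> \<and> Inr b \<in> \<beta>" if ab: "a \<le> w" "b \<le> w" "a \<noteq> b" for a b
    proof -
      obtain i where i: "i < w" "dF w i a b" using dF_factor(1)[OF wo ab] by blast
      obtain p where p: "p \<in> V" "\<tau> p = i" using \<tau>surj[OF i(1)] by blast
      show ?thesis
      proof (rule ex1I[of _ "{Inl p, Inr a, Inr b}"])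
        show "{Inl p, Inr a, Inr b} \<in> Bo \<union> Bn \<and> Inr a \<in> {Inl p, Inr a, Inr b} \<and> Inr b \<in> {Inl p, Inr a, Inr b}"
          using BnI[OF p(1)] i p by simp
      next
        fix \<beta> assume \<beta>: "\<beta> \<in> Bo \<union> Bn \<and> Inr a \<in> \<beta> \<and> Inr b \<in> \<beta>"
        show "\<beta> = {Inl p, Inr a, Inr b}"
        proof (cases "\<beta> \<in> Bo")
          case True
          then obtain \<delta> where d: "\<beta> = Inl ` \<delta>" using BoE by blast
          thus ?thesis using \<beta> by auto
        next
          case False
          then obtain p' a' b' where pab: "p' \<in> V" "dF w (\<tau> p') a' b'" "\<beta> = {Inl p', Inr a', Inr b'}" using BnE \<beta> by blast
          have "(a = a' \<and> b = b') \<or> (a = b' \<and> b = a')" using pab(3) \<beta> ab(3) by auto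
          hence ab': "dF w (\<tau> p') a b" using pab(2) dF_sym by metis
          have "\<tau> p' = i" using dF_factor(2)[OF wo ab \<tau>rng[OF pab(1)] i(1) ab' i(2)] .
          hence pp: "p' = p" using \<tau>inj[OF pab(1) p(1)] p by simp
          from \<open>(a = a' \<and> b = b') \<or> (a = b' \<and> b = a')\<close> show ?thesis
          proof
            assume "a = a' \<and> b = b'" thus ?thesis using pab(3) pp by simp
          next
            assume "a = b' \<and> b = a'" thus ?thesis using pab(3) pp by (simp add: insert_commute)
          qed
        qed
      qed
    qed
    from uv(1) have uc: "(\<exists>p\<in>V. u = Inl p) \<or> (\<exists>a\<le>w. u = Inr a)" unfolding V'_def by auto
    from uv(2) have vc: "(\<exists>p\<in>V. v = Inl p) \<or> (\<exists>a\<le>w. v = Inr a)" unfolding V'_def by auto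
    from uc vc show ?thesis
    proof (elim disjE bexE exE conjE)
      fix p q assume "p \<in> V" "u = Inl p" "q \<in> V" "v = Inl q"
      moreover hence "p \<noteq> q" using uv(3) by simp
      ultimately show ?thesis using case_ll[of p q] by simp
    next
      fix p a assume "p \<in> V" "u = Inl p" "a \<le> w" "v = Inr a"
      thus ?thesis using case_lr[of p a] by simp
    next
      fix p a assume "a \<le> w" "u = Inr a" "p \<in> V" "v = Inl p"
      thus ?thesis using ex1_swap[OF case_lr[of p a]] by simp
    next
      fix a b assume "a \<le> w" "u = Inr a" "b \<le> w" "v = Inr b"
      moreover hence "a \<noteq> b" using uv(3) by simp
      ultimately show ?thesis using case_rr[of a b] by simp
    qed
  qed
  have "sts V' (Bo \<union> Bn)" unfolding sts_def using A B C by blast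
  thus ?thesis using cV' by blast
qed



theorem corollary3p3:
  fixes h :: nat and H :: "nat \<Rightarrow> nat \<Rightarrow> real"
  assumes "is_hadamard h H"
    and "h mod 3 = 1 \<or> h mod 3 = 2"
  shows "\<exists>M N phi. 3 * M = (h + 1) * (2 * h + 1) \<and> N = h * (2 * h + 1) \<and> is_ETF M N phi"
proof -
  have h1: "h \<ge> 1" using assms(2) by (cases h) auto
  consider "h = 1" | "h = 2" | "h \<ge> 3" using h1 by linarith
  thus ?thesis
  proof cases
    case 1
    have "sts {0::nat} {}" unfolding sts_def by simp
    moreover have "card {0::nat} = 2*h - 1" using 1 by simp
    ultimately show ?thesis using tremain assms(1) h1 by blast
  next
    case 2
    have "sts {0::nat,1,2} {{0,1,2}}" unfolding sts_def by auto
    moreover have "card {0::nat,1,2} = 2*h - 1" using 2 by simp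
    ultimately show ?thesis using tremain assms(1) h1 by blast
  next
    case 3
    obtain k where k: "h = 4*k" using hadamard_4dvd[OF assms(1) 3] by blast
    have "k mod 3 = 1 \<or> k mod 3 = 2" using assms(2) k by presburger
    thus ?thesis
    proof
      assume "k mod 3 = 2"
      define t where "t = k div 3"
      have t: "k = 3*t + 2" unfolding t_def using \<open>k mod 3 = 2\<close> div_mult_mod_eq[of k 3] by linarith
      define m where "m = 8*t + 5"
      have "odd m" unfolding m_def by simp
      hence "sts (bpts m) (bblocks m)" by (rule bose_sts)
      moreover have "card (bpts m) = 2*h - 1" using bose_card[of m] k t m_def by simp
      ultimately show ?thesis using tremain assms(1) h1 by blast
    next
      assume "k mod 3 = 1"
      define t where "t = k div 3"
      have t: "k = 3*t + 1" unfolding t_def using \<open>k mod 3 = 1\<close> div_mult_mod_eq[of k 3] by linarith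
      define m where "m = 4*t + 1"
      have "odd m" unfolding m_def by simp
      hence S: "sts (bpts m) (bblocks m)" by (rule bose_sts)
      have "odd (card (bpts m))" using bose_card[of m] m_def by simp
      then obtain V' :: "((nat \<times> nat) + nat) set" and Bl' where "sts V' Bl'" "card V' = 2 * card (bpts m) + 1"
        using sts_double[OF S] by blast
      moreover have "2 * card (bpts m) + 1 = 2*h - 1" using bose_card[of m] k t m_def by simp
      ultimately show ?thesis using tremain assms(1) h1 by metis
    qed
  qed
qed


end
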